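(* There exist an infinite family $\mathcal{P}$ of pairs $(T_1, T_2)$ of unrooted binary phylogenetic trees, where $T_1$ and $T_2$ have a common leaf set $X$, and a function $g$ with $g(n)/n \to 0$ as $n \to \infty$, such that for every pair $(T_1,T_2) \in \mathcal{P}$ with $n = |X|$, every agreement forest of $\{T_1, T_2\}$ has at least $n - g(n)$ components.
   Context: A (binary) phylogenetic tree on a finite set $X$ is an unrooted tree whose internal vertices have degree 3 and whose leaves are bijectively labelled by $X$. Two phylogenetic trees on $X$ are isomorphic ($\cong$) if there is a graph isomorphism between them fixing every leaf label. For $Y \subseteq X$, $T[Y]$ is the minimal subtree of $T$ connecting the leaves in $Y$, and $T|_Y$ is obtained from $T[Y]$ by suppressing all degree-2 vertices. An agreement forest of $\{T_1,T_2\}$ is a partition $\{Y_1,\ldots,Y_k\}$ of $X$ (whose parts are called components) such that (1) $T_1|_{Y_h} \cong T_2|_{Y_h}$ for all $h$, and (2) for each $i \in\{1,2\}$ and all $h \ne h'$, $T_i[Y_h]$ and $T_i[Y_{h'}]$ are vertex-disjoint. *)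

theory Defs
  imports Complex_Main "HOL-Library.Disjoint_Sets"
begin

type_synonym 'v graph = "'v set \<times> 'v set set"

definition is_path :: "'v set set \<Rightarrow> 'v \<Rightarrow> 'v \<Rightarrow> 'v list \<Rightarrow> bool" where
  "is_path E u v p \<longleftrightarrow> p \<noteq> [] \<and> hd p = u \<and> last p = v \<and> distinct p \<and>
     (\<forall>i. Suc i < length p \<longrightarrow> {p ! i, p ! Suc i} \<in> E)"

definition has_cycle :: "'v set set \<Rightarrow> bool" where
  "has_cycle E \<longleftrightarrow> (\<exists>c. 3 \<le> length c \<and> distinct c \<and>
     (\<forall>i. Suc i < length c \<longrightarrow> {c ! i, c ! Suc i} \<in> E) \<and> {last c, hd c} \<in> E)"

definition is_tree :: "'v graph \<Rightarrow> bool" where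
  "is_tree T \<longleftrightarrow> (case T of (V, E) \<Rightarrow>
     finite V \<and> V \<noteq> {} \<and>
     (\<forall>e\<in>E. \<exists>u v. u \<in> V \<and> v \<in> V \<and> u \<noteq> v \<and> e = {u, v}) \<and>
     (\<forall>u\<in>V. \<forall>v\<in>V. \<exists>p. is_path E u v p) \<and>
     \<not> has_cycle E)"

definition degree :: "'v set set \<Rightarrow> 'v \<Rightarrow> nat" where
  "degree E v = card {e \<in> E. v \<in> e}"

text \<open>Unrooted binary phylogenetic tree on X: the leaves are the elements of X
  themselves (labelling by identity); every non-leaf vertex has degree 3.\<close>
definition phylo_tree :: "'v set \<Rightarrow> 'v graph \<Rightarrow> bool" where
  "phylo_tree X T \<longleftrightarrow> (case T of (V, E) \<Rightarrow>
     is_tree T \<and> X \<subseteq> V \<and>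
     (\<forall>v\<in>V. v \<in> X \<longleftrightarrow> degree E v \<le> 1) \<and>
     (\<forall>v\<in>V - X. degree E v = 3))"

definition span_vertices :: "'v graph \<Rightarrow> 'v set \<Rightarrow> 'v set" where
  "span_vertices T Y = {w. \<exists>u\<in>Y. \<exists>v\<in>Y. \<exists>p. is_path (snd T) u v p \<and> w \<in> set p}"

definition span_tree :: "'v graph \<Rightarrow> 'v set \<Rightarrow> 'v graph" where
  "span_tree T Y = (span_vertices T Y, {e \<in> snd T. e \<subseteq> span_vertices T Y})"

definition suppress :: "'v graph \<Rightarrow> 'v graph" where
  "suppress T = (case T of (V, E) \<Rightarrow>
     (let R = {v \<in> V. degree E v \<noteq> 2} in
      (R, {{u, w} | u w. u \<in> R \<and> w \<in> R \<and> u \<noteq> w \<and>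
           (\<exists>p. is_path E u w p \<and> (\<forall>z\<in>set p. z \<noteq> u \<and> z \<noteq> w \<longrightarrow> z \<notin> R))})))"

definition restrict_tree :: "'v graph \<Rightarrow> 'v set \<Rightarrow> 'v graph" where
  "restrict_tree T Y = suppress (span_tree T Y)"

definition iso_fixing :: "'v set \<Rightarrow> 'v graph \<Rightarrow> 'v graph \<Rightarrow> bool" where
  "iso_fixing Y T T' \<longleftrightarrow> (\<exists>f. bij_betw f (fst T) (fst T') \<and> (\<forall>y\<in>Y. f y = y) \<and>
     (\<forall>u\<in>fst T. \<forall>w\<in>fst T. {u, w} \<in> snd T \<longleftrightarrow> {f u, f w} \<in> snd T'))"

definition agreement_forest :: "'v set \<Rightarrow> 'v graph \<Rightarrow> 'v graph \<Rightarrow> 'v set set \<Rightarrow> bool" where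
  "agreement_forest X T1 T2 F \<longleftrightarrow> partition_on X F \<and>
     (\<forall>Y\<in>F. iso_fixing Y (restrict_tree T1 Y) (restrict_tree T2 Y)) \<and>
     (\<forall>Y\<in>F. \<forall>Y'\<in>F. Y \<noteq> Y' \<longrightarrow>
        span_vertices T1 Y \<inter> span_vertices T1 Y' = {} \<and>
        span_vertices T2 Y \<inter> span_vertices T2 Y' = {})"

end

theory Submission
  imports Defs "HOL-Real_Asymp.Real_Asymp"
begin


lemma is_path_rev: "is_path E u v p \<Longrightarrow> is_path E v u (rev p)"
  unfolding is_path_def
proof (intro conjI allI impI)
  assume h: "p \<noteq> [] \<and> hd p = u \<and> last p = v \<and> distinct p \<and> (\<forall>i. Suc i < length p \<longrightarrow> {p ! i, p ! Suc i} \<in> E)"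
  fix i assume i: "Suc i < length (rev p)"
  have "{p ! (length p - Suc (Suc i)), p ! Suc (length p - Suc (Suc i))} \<in> E"
    using h i by auto
  moreover have "Suc (length p - Suc (Suc i)) = length p - Suc i" using i by auto
  ultimately show "{rev p ! i, rev p ! Suc i} \<in> E" using i
    by (auto simp: rev_nth insert_commute)
qed (auto simp: hd_rev last_rev)

lemma is_path_mono: "is_path E u v p \<Longrightarrow> E \<subseteq> E' \<Longrightarrow> is_path E' u v p"
  unfolding is_path_def by blast

lemma is_path_edge: "is_path E u v p \<Longrightarrow> Suc i < length p \<Longrightarrow> {p ! i, p ! Suc i} \<in> E"
  unfolding is_path_def by blast

lemma is_path_rtranclp:
  assumes "(\<lambda>a b. {a, b} \<in> E)\<^sup>*\<^sup>* u v"
  shows "\<exists>p. is_path E u v p"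
  using assms
proof (induction rule: rtranclp_induct)
  case base
  show ?case by (rule exI[of _ "[u]"]) (simp add: is_path_def)
next
  case (step v w)
  then obtain p where p: "is_path E u v p" by blast
  show ?case
  proof (cases "w \<in> set p")
    case True
    then obtain i where i: "i < length p" "p ! i = w" by (auto simp: in_set_conv_nth)
    have l: "last (take (Suc i) p) = w" using i by (subst last_conv_nth) auto
    have "is_path E u w (take (Suc i) p)"
      unfolding is_path_def
    proof (intro conjI allI impI)
      show "take (Suc i) p \<noteq> []" using i(1) by (cases p) auto
      show "hd (take (Suc i) p) = u" using p i by (cases p) (auto simp: is_path_def)
      show "last (take (Suc i) p) = w" by (rule l)
      show "distinct (take (Suc i) p)" using p by (simp add: is_path_def)
      fix k assume "Suc k < length (take (Suc i) p)"
      then show "{take (Suc i) p ! k, take (Suc i) p ! Suc k} \<in> E"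
        using p by (simp add: is_path_def)
    qed
    then show ?thesis by blast
  next
    case False
    have "is_path E u w (p @ [w])"
      unfolding is_path_def
    proof (intro conjI allI impI)
      show "p @ [w] \<noteq> []" by simp
      show "hd (p @ [w]) = u" using p by (simp add: is_path_def)
      show "last (p @ [w]) = w" by simp
      show "distinct (p @ [w])" using p False by (simp add: is_path_def)
      fix k assume k: "Suc k < length (p @ [w])"
      show "{(p @ [w]) ! k, (p @ [w]) ! Suc k} \<in> E"
      proof (cases "Suc k < length p")
        case True
        then show ?thesis using p by (simp add: is_path_def nth_append)
      next
        case False
        then have "k = length p - 1" "p \<noteq> []" using k p by (auto simp: is_path_def)
        then have "p ! k = v" using p by (simp add: is_path_def last_conv_nth)
        then show ?thesis using False k step(2) \<open>k = length p - 1\<close> \<open>p \<noteq> []\<close> by (simp add: nth_append)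
      qed
    qed
    then show ?thesis by blast
  qed
qed

lemma ivt_list:
  fixes f :: "'a \<Rightarrow> nat"
  assumes "p \<noteq> []" "\<forall>i. Suc i < length p \<longrightarrow> f (p ! Suc i) \<le> f (p ! i) + 1 \<and> f (p ! i) \<le> f (p ! Suc i) + 1"
    "min (f (hd p)) (f (last p)) \<le> j" "j \<le> max (f (hd p)) (f (last p))"
  shows "\<exists>i < length p. f (p ! i) = j"
  using assms
proof (induction p)
  case Nil then show ?case by simp
next
  case (Cons a p)
  show ?case
  proof (cases "p = [] \<or> f a = j")
    case True
    then show ?thesis using Cons.prems by auto
  next
    case False
    then have pne: "p \<noteq> []" and ne: "f a \<noteq> j" by auto
    have step: "f (hd p) \<le> f a + 1 \<and> f a \<le> f (hd p) + 1"
      using Cons.prems(2)[rule_format, of 0] pne by (auto simp: hd_conv_nth)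
    have "min (f (hd p)) (f (last p)) \<le> j \<and> j \<le> max (f (hd p)) (f (last p))"
      using Cons.prems(3,4) pne ne step by auto
    then obtain i where "i < length p" "f (p ! i) = j"
      using Cons.IH[OF pne] Cons.prems(2) pne by fastforce
    then show ?thesis by (intro exI[of _ "Suc i"]) auto
  qed
qed


locale cat =
  fixes n :: nat and \<pi> :: "nat \<Rightarrow> nat"
  assumes n4: "4 \<le> n" and bij: "bij_betw \<pi> {..<n} {..<n}"
begin

definition att :: "nat \<Rightarrow> nat" where
  "att p = (if p = 0 then 0 else if p = n - 1 then n - 3 else p - 1)"

definition kap :: "nat \<Rightarrow> nat" where
  "kap v = (if v < n then att (\<pi> v) else v - n)"

definition adj :: "nat \<Rightarrow> nat \<Rightarrow> bool" where
  "adj a b \<longleftrightarrow> (a < n \<and> b = n + kap a) \<or> (b < n \<and> a = n + kap b) \<or>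
     (n \<le> a \<and> n \<le> b \<and> (b = Suc a \<or> a = Suc b) \<and> a < n + (n - 2) \<and> b < n + (n - 2))"

definition VV :: "nat set" where "VV = {..<n + (n - 2)}"
definition EE :: "nat set set" where "EE = {{a, b} | a b. adj a b}"
definition TT :: "nat graph" where "TT = (VV, EE)"

lemma pi_lt: "x < n \<Longrightarrow> \<pi> x < n"
  using bij by (auto simp: bij_betw_def)

lemma pi_inj: "x < n \<Longrightarrow> y < n \<Longrightarrow> \<pi> x = \<pi> y \<Longrightarrow> x = y"
  using bij by (auto simp: bij_betw_def inj_on_def)

lemma att_le: "p < n \<Longrightarrow> att p \<le> n - 3"
  using n4 by (auto simp: att_def)

lemma kap_leaf_le: "x < n \<Longrightarrow> kap x \<le> n - 3"
  by (simp add: kap_def att_le pi_lt)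

lemma kap_spine[simp]: "kap (n + j) = j"
  by (simp add: kap_def)

lemma spine_eq: "n \<le> v \<Longrightarrow> v = n + kap v"
  by (simp add: kap_def)

lemma adj_sym: "adj a b \<longleftrightarrow> adj b a"
  unfolding adj_def by auto

lemma adj_irrefl: "\<not> adj a a"
  unfolding adj_def by auto

lemma adj_VV: "adj a b \<Longrightarrow> a \<in> VV \<and> b \<in> VV"
  using kap_leaf_le n4 unfolding adj_def VV_def by fastforce

lemma EE_iff: "{a, b} \<in> EE \<longleftrightarrow> adj a b"
  unfolding EE_def using adj_sym by (auto simp: doubleton_eq_iff)

lemma EE_form: "e \<in> EE \<Longrightarrow> \<exists>a b. e = {a, b} \<and> adj a b"
  unfolding EE_def by auto

lemma leaf_nb: "x < n \<Longrightarrow> adj x w \<longleftrightarrow> w = n + kap x"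
  unfolding adj_def by auto

lemma kap_lip: "adj a b \<Longrightarrow> kap b \<le> kap a + 1 \<and> kap a \<le> kap b + 1"
  unfolding adj_def by (auto simp: kap_def)

lemma path_interior:
  assumes "is_path EE u v p" "0 < i" "Suc i < length p"
  shows "n \<le> p ! i"
proof (rule ccontr)
  assume "\<not> n \<le> p ! i"
  then have l: "p ! i < n" by simp
  have "{p ! (i - 1), p ! Suc (i - 1)} \<in> EE" using assms by (intro is_path_edge) auto
  then have "adj (p ! i) (p ! (i - 1))" using assms(2) by (simp add: EE_iff adj_sym)
  then have a: "p ! (i - 1) = n + kap (p ! i)" using leaf_nb[OF l] by simp
  have "adj (p ! i) (p ! Suc i)" using is_path_edge[OF assms(1,3)] by (simp add: EE_iff)
  then have b: "p ! Suc i = n + kap (p ! i)" using leaf_nb[OF l] by simp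
  have "distinct p" using assms(1) by (simp add: is_path_def)
  then have "p ! (i - 1) \<noteq> p ! Suc i" using assms by (simp add: nth_eq_iff_index_eq)
  then show False using a b by simp
qed

lemma path_ivt:
  assumes "is_path EE u v p" "min (kap u) (kap v) \<le> j" "j \<le> max (kap u) (kap v)"
  shows "\<exists>i < length p. kap (p ! i) = j"
proof -
  have "p \<noteq> []" "hd p = u" "last p = v" using assms(1) by (auto simp: is_path_def)
  moreover have "\<forall>i. Suc i < length p \<longrightarrow> kap (p ! Suc i) \<le> kap (p ! i) + 1 \<and> kap (p ! i) \<le> kap (p ! Suc i) + 1"
    using assms(1) kap_lip by (auto simp: EE_iff dest!: is_path_edge)
  ultimately show ?thesis using ivt_list[of p kap j] assms(2,3) by auto
qed

lemma path_first_leaf: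
  assumes "is_path EE u v p" "u < n" "u \<noteq> v"
  shows "1 < length p \<and> p ! 1 = n + kap u"
proof -
  have ne: "p \<noteq> []" "hd p = u" "last p = v" using assms(1) by (auto simp: is_path_def)
  have "length p \<noteq> 1" using ne assms(3) by (cases p) auto
  then have "1 < length p" using ne by (cases p) auto
  moreover have "p ! 0 = u" using ne by (simp add: hd_conv_nth)
  ultimately show ?thesis using is_path_edge[OF assms(1), of 0] leaf_nb[OF assms(2)]
    by (simp add: EE_iff)
qed

end


context cat begin

lemma nb_edges:
  assumes "v \<in> S"
  shows "{e \<in> {e \<in> EE. e \<subseteq> S}. v \<in> e} = (\<lambda>w. {v, w}) ` {w \<in> S. adj v w}"
proof
  show "{e \<in> {e \<in> EE. e \<subseteq> S}. v \<in> e} \<subseteq> (\<lambda>w. {v, w}) ` {w \<in> S. adj v w}"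
  proof
    fix e assume e: "e \<in> {e \<in> {e \<in> EE. e \<subseteq> S}. v \<in> e}"
    then obtain a b where ab: "e = {a, b}" "adj a b" using EE_form by blast
    show "e \<in> (\<lambda>w. {v, w}) ` {w \<in> S. adj v w}"
    proof (cases "v = a")
      case True then show ?thesis using ab e by auto
    next
      case False
      then have "v = b" using ab e by auto
      then show ?thesis using ab e adj_sym by (auto simp: insert_commute)
    qed
  qed
next
  show "(\<lambda>w. {v, w}) ` {w \<in> S. adj v w} \<subseteq> {e \<in> {e \<in> EE. e \<subseteq> S}. v \<in> e}"
    using assms by (auto simp: EE_iff)
qed

lemma degree_sub:
  assumes "v \<in> S"
  shows "degree {e \<in> EE. e \<subseteq> S} v = card {w \<in> S. adj v w}"
proof -
  have "inj_on (\<lambda>w. {v, w}) {w \<in> S. adj v w}"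
    by (auto simp: inj_on_def doubleton_eq_iff)
  then show ?thesis unfolding degree_def nb_edges[OF assms] by (simp add: card_image)
qed

lemma degree_EE: "degree EE v = card {w. adj v w}"
  using degree_sub[of v UNIV] by simp

lemma leaf_nbs: "x < n \<Longrightarrow> {w. adj x w} = {n + kap x}"
  using leaf_nb by auto

lemma deg_leaf: "x < n \<Longrightarrow> degree EE x = 1"
  by (simp add: degree_EE leaf_nbs)

lemma spine_nbs:
  assumes "j < n - 2"
  shows "{w. adj (n + j) w} = {x. x < n \<and> kap x = j} \<union> {w. (0 < j \<and> w = n + j - 1) \<or> (j + 1 < n - 2 \<and> w = n + j + 1)}"
  using assms unfolding adj_def by (auto simp: kap_def)

lemma att_fiber:
  assumes "j \<le> n - 3"
  shows "{p. p < n \<and> att p = j} = (if j = 0 then {0, 1} else if j = n - 3 then {n - 2, n - 1} else {j + 1})"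
  using assms n4 unfolding att_def by auto

lemma att_fiber_card:
  assumes "j \<le> n - 3"
  shows "card {p. p < n \<and> att p = j} = (if j = 0 \<or> j = n - 3 then 2 else 1)"
  using assms n4 by (simp add: att_fiber)

lemma kap_fiber_card:
  "card {x. x < n \<and> kap x = j} = card {p. p < n \<and> att p = j}"
proof -
  have "\<pi> ` {x. x < n \<and> kap x = j} = {p. p < n \<and> att p = j}"
  proof
    show "\<pi> ` {x. x < n \<and> kap x = j} \<subseteq> {p. p < n \<and> att p = j}"
      using pi_lt by (auto simp: kap_def)
  next
    show "{p. p < n \<and> att p = j} \<subseteq> \<pi> ` {x. x < n \<and> kap x = j}"
    proof
      fix p assume p: "p \<in> {p. p < n \<and> att p = j}"
      have "p \<in> \<pi> ` {..<n}" using p bij by (simp add: bij_betw_def)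
      then obtain x where "x < n" "\<pi> x = p" by auto
      then show "p \<in> \<pi> ` {x. x < n \<and> kap x = j}" using p by (auto simp: kap_def)
    qed
  qed
  moreover have "inj_on \<pi> {x. x < n \<and> kap x = j}"
    using pi_inj by (auto simp: inj_on_def)
  ultimately show ?thesis by (metis card_image)
qed

lemma deg_spine:
  assumes "j < n - 2"
  shows "degree EE (n + j) = 3"
proof -
  let ?A = "{x. x < n \<and> kap x = j}"
  let ?B = "{w. (0 < j \<and> w = n + j - 1) \<or> (j + 1 < n - 2 \<and> w = n + j + 1)}"
  have fa: "finite ?A" by simp
  have fb: "finite ?B" by (rule finite_subset[of _ "{n + j - 1, n + j + 1}"]) auto
  have dj: "?A \<inter> ?B = {}" by auto
  have cA: "card ?A = (if j = 0 \<or> j = n - 3 then 2 else 1)"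
    using kap_fiber_card att_fiber_card[of j] assms by simp
  have cB: "card ?B = (if j = 0 \<or> j = n - 3 then 1 else 2)"
  proof -
    have "?B = (if j = 0 then {n + 1} else if j = n - 3 then {n + j - 1} else {n + j - 1, n + j + 1})"
      using assms n4 by auto
    then show ?thesis using assms n4 by auto
  qed
  show ?thesis unfolding degree_EE spine_nbs[OF assms] card_Un_disjoint[OF fa fb dj] cA cB
    by simp
qed

lemma reach_root:
  assumes "v \<in> VV"
  shows "(\<lambda>a b. {a, b} \<in> EE)\<^sup>*\<^sup>* v n"
proof -
  have sp: "(\<lambda>a b. {a, b} \<in> EE)\<^sup>*\<^sup>* (n + j) n" if "j < n - 2" for j
    using that
  proof (induction j)
    case 0 then show ?case by simp
  next
    case (Suc j)
    have "Suc (n + j) < n + (n - 2)" "n + j < n + (n - 2)" using Suc.prems by linarith+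
    then have "{n + Suc j, n + j} \<in> EE" unfolding EE_iff adj_def by simp
    then show ?case using Suc by (meson Suc_lessD converse_rtranclp_into_rtranclp)
  qed
  show ?thesis
  proof (cases "v < n")
    case True
    have "{v, n + kap v} \<in> EE" using leaf_nb[OF True] by (simp add: EE_iff)
    moreover have "kap v < n - 2" using kap_leaf_le[OF True] n4 by simp
    ultimately show ?thesis using sp by (meson converse_rtranclp_into_rtranclp)
  next
    case False
    then have "v = n + kap v" "kap v < n - 2" using assms spine_eq by (auto simp: VV_def kap_def)
    then show ?thesis using sp by metis
  qed
qed

lemma connected:
  assumes "u \<in> VV" "v \<in> VV"
  shows "\<exists>p. is_path EE u v p"
proof -
  let ?r = "\<lambda>a b. {a, b} \<in> EE"
  have c: "conversep ?r = ?r" by (auto simp: fun_eq_iff insert_commute)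
  have "?r\<^sup>*\<^sup>* v n" by (rule reach_root[OF assms(2)])
  then have "(conversep ?r)\<^sup>*\<^sup>* n v" by (rule rtranclp_converseI)
  then have "?r\<^sup>*\<^sup>* n v" unfolding c .
  then have "?r\<^sup>*\<^sup>* u v" using reach_root[OF assms(1)] by simp
  then show ?thesis by (rule is_path_rtranclp)
qed

lemma no_cycle: "\<not> has_cycle EE"
proof
  assume "has_cycle EE"
  then obtain c where c: "3 \<le> length c" "distinct c"
    "\<forall>i. Suc i < length c \<longrightarrow> {c ! i, c ! Suc i} \<in> EE" "{last c, hd c} \<in> EE"
    unfolding has_cycle_def by blast
  define L where "L = length c"
  have ne: "c \<noteq> []" using c(1) by auto
  have lastc: "last c = c ! (L - 1)" using ne by (simp add: L_def last_conv_nth)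
  have hdc: "hd c = c ! 0" using ne by (simp add: hd_conv_nth)
  have nbr: "\<exists>a b. a \<noteq> b \<and> a \<in> set c \<and> b \<in> set c \<and> adj (c ! t) a \<and> adj (c ! t) b"
    if t: "t < L" for t
  proof -
    define pr where "pr = (if t = 0 then L - 1 else t - 1)"
    define su where "su = (if t = L - 1 then 0 else t + 1)"
    have lt: "pr < L" "su < L" using t c(1) by (auto simp: pr_def su_def L_def)
    have "pr \<noteq> su" using t c(1) by (auto simp: pr_def su_def L_def)
    then have d: "c ! pr \<noteq> c ! su" using lt c(2) by (simp add: nth_eq_iff_index_eq L_def)
    have a1: "adj (c ! t) (c ! pr)"
    proof (cases "t = 0")
      case True then show ?thesis using c(4) lastc hdc by (simp add: pr_def EE_iff adj_sym)
    next
      case False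
      then have "{c ! (t - 1), c ! Suc (t - 1)} \<in> EE" using c(3)[rule_format, of "t - 1"] t by (simp add: L_def)
      then show ?thesis using False by (simp add: pr_def EE_iff adj_sym)
    qed
    have a2: "adj (c ! t) (c ! su)"
    proof (cases "t = L - 1")
      case True then show ?thesis using c(4) lastc hdc by (simp add: su_def EE_iff)
    next
      case False
      then have "{c ! t, c ! Suc t} \<in> EE" using c(3) t by (simp add: L_def)
      then show ?thesis using False by (simp add: su_def EE_iff)
    qed
    show ?thesis using d a1 a2 lt nth_mem unfolding L_def by blast
  qed
  have big: "n \<le> c ! t" if t: "t < L" for t
  proof (rule ccontr)
    assume "\<not> n \<le> c ! t"
    then have l: "c ! t < n" by simp
    obtain a b where "a \<noteq> b" "adj (c ! t) a" "adj (c ! t) b" using nbr[OF t] by blast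
    then show False using leaf_nb[OF l] by simp
  qed
  define M where "M = Max (set c)"
  have "M \<in> set c" using ne by (simp add: M_def)
  then obtain t where t: "t < L" "c ! t = M" by (auto simp: in_set_conv_nth L_def)
  have Mn: "n \<le> M" using big[OF t(1)] t(2) by simp
  obtain a b where ab: "a \<noteq> b" "a \<in> set c" "b \<in> set c" "adj M a" "adj M b"
    using nbr[OF t(1)] t(2) by blast
  have "n \<le> a" "n \<le> b" using ab(2,3) big by (auto simp: in_set_conv_nth L_def)
  moreover have "a \<le> M" "b \<le> M" using ab(2,3) by (auto simp: M_def)
  ultimately have "M = Suc a" "M = Suc b" using ab(4,5) Mn unfolding adj_def by auto
  then show False using ab(1) by simp
qed

lemma phylo: "phylo_tree {..<n} TT"
proof -
  have tree: "is_tree TT"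
    unfolding is_tree_def TT_def
  proof (simp only: prod.case, intro conjI)
    show "finite VV" by (simp add: VV_def)
    have "0 \<in> VV" using n4 by (simp add: VV_def)
    then show "VV \<noteq> {}" by blast
    show "\<forall>e\<in>EE. \<exists>u v. u \<in> VV \<and> v \<in> VV \<and> u \<noteq> v \<and> e = {u, v}"
      using EE_form adj_VV adj_irrefl by metis
    show "\<forall>u\<in>VV. \<forall>v\<in>VV. \<exists>p. is_path EE u v p" using connected by blast
    show "\<not> has_cycle EE" by (rule no_cycle)
  qed
  have deg: "degree EE v = 3" if "v \<in> VV" "\<not> v < n" for v
  proof -
    have "v = n + (v - n)" "v - n < n - 2" using that by (auto simp: VV_def)
    then show ?thesis using deg_spine[of "v - n"] by metis
  qed
  have sub: "{..<n} \<subseteq> VV" by (auto simp: VV_def)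
  have iff: "\<forall>v\<in>VV. v \<in> {..<n} \<longleftrightarrow> degree EE v \<le> 1"
    using deg deg_leaf by fastforce
  have d3: "\<forall>v\<in>VV - {..<n}. degree EE v = 3" using deg by auto
  show ?thesis unfolding phylo_tree_def TT_def prod.case
    using tree sub iff d3 by (simp add: TT_def)
qed

end


locale catY = cat +
  fixes Y :: "nat set"
  assumes Ysub: "Y \<subseteq> {..<n}" and Y2: "2 \<le> card Y"
begin

definition S where "S = span_vertices TT Y"
definition ES where "ES = {e \<in> EE. e \<subseteq> S}"
definition R where "R = {v \<in> S. degree ES v \<noteq> 2}"
definition SE where "SE = {{u, w} | u w. u \<in> R \<and> w \<in> R \<and> u \<noteq> w \<and>
           (\<exists>p. is_path ES u w p \<and> (\<forall>z\<in>set p. z \<noteq> u \<and> z \<noteq> w \<longrightarrow> z \<notin> R))}"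
definition lo where "lo = Min (kap ` Y)"
definition hi where "hi = Max (kap ` Y)"

lemma finY: "finite Y" using Y2 by (metis card.infinite not_numeral_le_zero)
lemma Yne: "Y \<noteq> {}" using Y2 by auto

lemma restrict_eq: "restrict_tree TT Y = (R, SE)"
  unfolding restrict_tree_def suppress_def span_tree_def R_def SE_def ES_def S_def
  by (simp add: TT_def Let_def)

lemma lo_hi: "y \<in> Y \<Longrightarrow> lo \<le> kap y \<and> kap y \<le> hi"
  using finY unfolding lo_def hi_def by auto

lemma hi_le: "hi \<le> n - 3"
proof -
  have "hi \<in> kap ` Y" using finY Yne unfolding hi_def by simp
  then show ?thesis using Ysub kap_leaf_le by auto
qed

lemma ES_sub: "ES \<subseteq> EE" by (auto simp: ES_def)

lemma Y_S: "Y \<subseteq> S"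
proof
  fix y assume "y \<in> Y"
  moreover have "is_path EE y y [y]" by (simp add: is_path_def)
  ultimately show "y \<in> S" unfolding S_def span_vertices_def TT_def by force
qed

lemma S_leaf: "w \<in> S \<Longrightarrow> w < n \<Longrightarrow> w \<in> Y"
proof -
  assume w: "w \<in> S" "w < n"
  then obtain u v p where p: "u \<in> Y" "v \<in> Y" "is_path EE u v p" "w \<in> set p"
    unfolding S_def span_vertices_def TT_def by auto
  then obtain i where i: "i < length p" "p ! i = w" by (auto simp: in_set_conv_nth)
  have ne: "p \<noteq> []" "hd p = u" "last p = v" using p(3) by (auto simp: is_path_def)
  show "w \<in> Y"
  proof (cases "i = 0 \<or> i = length p - 1")
    case True
    then show ?thesis using ne i p by (auto simp: hd_conv_nth last_conv_nth)
  next
    case False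
    then have "n \<le> p ! i" using i by (intro path_interior[OF p(3)]) auto
    then show ?thesis using i w by simp
  qed
qed

lemma spine_pair:
  assumes "u \<in> Y" "v \<in> Y" "u \<noteq> v" "min (kap u) (kap v) \<le> j" "j \<le> max (kap u) (kap v)"
  shows "n + j \<in> S"
proof -
  have uv: "u \<in> VV" "v \<in> VV" using assms Ysub by (auto simp: VV_def)
  obtain p where p: "is_path EE u v p" using connected[OF uv] by blast
  have un: "u < n" "v < n" using assms Ysub by auto
  have f1: "1 < length p \<and> p ! 1 = n + kap u" by (rule path_first_leaf[OF p un(1) assms(3)])
  have f2: "1 < length (rev p) \<and> rev p ! 1 = n + kap v"
    by (rule path_first_leaf[OF is_path_rev[OF p] un(2)]) (use assms(3) in auto)
  have inS: "x \<in> set p \<Longrightarrow> x \<in> S" for x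
    using p assms(1,2) unfolding S_def span_vertices_def TT_def by auto
  have ne: "p \<noteq> []" "hd p = u" "last p = v" using p by (auto simp: is_path_def)
  show ?thesis
  proof (cases "j = kap u \<or> j = kap v")
    case True
    then show ?thesis
    proof
      assume "j = kap u"
      have "p ! 1 \<in> set p" using f1 by (intro nth_mem) simp
      then have "n + kap u \<in> set p" using f1 by metis
      then show ?thesis using inS \<open>j = kap u\<close> by simp
    next
      assume "j = kap v"
      have "rev p ! 1 \<in> set (rev p)" using f2 by (intro nth_mem) simp
      then have "n + kap v \<in> set p" using f2 by (metis set_rev)
      then show ?thesis using inS \<open>j = kap v\<close> by simp
    qed
  next
    case False
    obtain i where i: "i < length p" "kap (p ! i) = j" using path_ivt[OF p assms(4,5)] by blast
    have "i \<noteq> 0" using i False ne by (metis hd_conv_nth)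
    moreover have "i \<noteq> length p - 1" using i False ne by (metis last_conv_nth)
    ultimately have "n \<le> p ! i" using i by (intro path_interior[OF p]) auto
    then have "p ! i = n + j" using spine_eq[of "p ! i"] i(2) by simp
    moreover have "p ! i \<in> set p" using i(1) by (rule nth_mem)
    ultimately show ?thesis using inS by simp
  qed
qed

lemma spine_S:
  assumes "lo \<le> j" "j \<le> hi"
  shows "n + j \<in> S"
proof -
  have "lo \<in> kap ` Y" "hi \<in> kap ` Y" using finY Yne unfolding lo_def hi_def by auto
  then obtain a b where ab: "a \<in> Y" "b \<in> Y" "kap a = lo" "kap b = hi" by auto
  show ?thesis
  proof (cases "a = b")
    case False
    then show ?thesis using spine_pair[OF ab(1,2) False] ab assms by auto
  next
    case True
    have "\<exists>c \<in> Y. c \<noteq> a"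
    proof (rule ccontr)
      assume "\<not> (\<exists>c\<in>Y. c \<noteq> a)"
      then have "Y \<subseteq> {a}" by auto
      then have "card Y \<le> card {a}" by (intro card_mono) auto
      then have "card Y \<le> 1" by simp
      then show False using Y2 by simp
    qed
    then obtain c where c: "c \<in> Y" "c \<noteq> a" by blast
    have "kap c = lo" using lo_hi[OF c(1)] ab True by simp
    then show ?thesis using spine_pair[OF ab(1) c(1) c(2)[symmetric]] ab True assms by auto
  qed
qed

lemma leaf_R: "y \<in> Y \<Longrightarrow> y \<in> R"
proof -
  assume y: "y \<in> Y"
  have yn: "y < n" using y Ysub by auto
  have "n + kap y \<in> S" using spine_S lo_hi[OF y] by auto
  then have "{w \<in> S. adj y w} = {n + kap y}" using leaf_nb[OF yn] by auto
  then show "y \<in> R" using Y_S y degree_sub[of y S] unfolding R_def ES_def by auto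
qed

lemma mid_R:
  assumes z: "z \<in> Y" "lo < kap z" "kap z < hi"
  shows "n + kap z \<in> R"
proof -
  let ?j = "kap z"
  have zn: "z < n" using z Ysub by auto
  have jn: "?j < n - 2" using z hi_le by simp
  have inS: "n + ?j \<in> S" using z by (intro spine_S) auto
  have sub1: "{w \<in> S. adj (n + ?j) w} \<subseteq> {w. adj (n + ?j) w}" by auto
  have fin: "finite {w. adj (n + ?j) w}"
    using deg_spine[OF jn] by (metis card.infinite degree_EE zero_neq_numeral)
  have c3: "card {w. adj (n + ?j) w} = 3" using deg_spine[OF jn] degree_EE by simp
  have sub2: "{n + ?j - 1, n + ?j + 1, z} \<subseteq> {w \<in> S. adj (n + ?j) w}"
  proof -
    have "n + (?j - 1) \<in> S" using z by (intro spine_S) auto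
    moreover have "n + (?j + 1) \<in> S" using z by (intro spine_S) auto
    moreover have "z \<in> S" using Y_S z by auto
    moreover have "adj (n + ?j) (n + ?j - 1)" "adj (n + ?j) (n + ?j + 1)" "adj (n + ?j) z"
      using z jn zn hi_le unfolding adj_def by auto
    moreover have "n + (?j - 1) = n + ?j - 1" using z by simp
    ultimately show ?thesis by auto
  qed
  have "n + ?j - 1 \<noteq> n + ?j + 1" "n + ?j - 1 \<noteq> z" "n + ?j + 1 \<noteq> z" using zn z by auto
  then have "card {n + ?j - 1, n + ?j + 1, z} = 3" by simp
  then have "card {w \<in> S. adj (n + ?j) w} = 3"
    using card_mono[OF _ sub2] card_mono[OF fin sub1] c3 fin
    by (metis (no_types, lifting) finite_subset le_antisym sub1)
  then show ?thesis unfolding R_def ES_def using inS degree_sub[OF inS] by simp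
qed

lemma gap_notR:
  assumes j: "lo < j" "j < hi" and no: "\<forall>y\<in>Y. kap y \<noteq> j"
  shows "n + j \<notin> R"
proof -
  have jn: "j < n - 2" using j hi_le by simp
  have inS: "n + j \<in> S" using j by (intro spine_S) auto
  have "{w \<in> S. adj (n + j) w} = {n + j - 1, n + j + 1}"
  proof
    show "{w \<in> S. adj (n + j) w} \<subseteq> {n + j - 1, n + j + 1}"
      using spine_nbs[OF jn] no S_leaf by auto
    have "n + (j - 1) \<in> S" using j by (intro spine_S) auto
    moreover have "n + (j + 1) \<in> S" using j by (intro spine_S) auto
    moreover have "adj (n + j) (n + j - 1)" "adj (n + j) (n + j + 1)"
      using j jn hi_le unfolding adj_def by auto
    moreover have "n + (j - 1) = n + j - 1" using j by simp
    ultimately show "{n + j - 1, n + j + 1} \<subseteq> {w \<in> S. adj (n + j) w}" by auto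
  qed
  moreover have "card {n + j - 1, n + j + 1} = 2" using j by auto
  ultimately show ?thesis unfolding R_def ES_def using inS degree_sub[OF inS] by simp
qed

lemma SE_path:
  assumes "{a, b} \<in> SE"
  shows "a \<in> R \<and> b \<in> R \<and> a \<noteq> b \<and> (\<exists>p. is_path ES a b p \<and> (\<forall>z\<in>set p. z \<noteq> a \<and> z \<noteq> b \<longrightarrow> z \<notin> R))"
proof -
  obtain u w p where uw: "{a, b} = {u, w}" "u \<in> R" "w \<in> R" "u \<noteq> w" "is_path ES u w p"
    "\<forall>z\<in>set p. z \<noteq> u \<and> z \<noteq> w \<longrightarrow> z \<notin> R"
    using assms unfolding SE_def by blast
  then have "(a = u \<and> b = w) \<or> (a = w \<and> b = u)" by (auto simp: doubleton_eq_iff)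
  then show ?thesis
  proof
    assume "a = u \<and> b = w" then show ?thesis using uw by blast
  next
    assume h: "a = w \<and> b = u"
    have "is_path ES a b (rev p)" using is_path_rev[OF uw(5)] h by simp
    then show ?thesis using uw h by auto
  qed
qed

lemma E1:
  assumes y: "y \<in> Y" and r: "n + kap y \<in> R"
  shows "{y, n + kap y} \<in> SE"
proof -
  have yn: "y < n" using y Ysub by auto
  have "{y, n + kap y} \<in> EE" using leaf_nb[OF yn] by (simp add: EE_iff)
  moreover have "y \<in> S" "n + kap y \<in> S" using Y_S y r by (auto simp: R_def)
  ultimately have "is_path ES y (n + kap y) [y, n + kap y]"
    using yn unfolding is_path_def ES_def by (auto simp: less_Suc_eq)
  moreover have "y \<noteq> n + kap y" using yn by simp
  ultimately show ?thesis unfolding SE_def using leaf_R[OF y] r by fastforce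
qed

lemma E2:
  assumes j: "lo \<le> j1" "j1 < j2" "j2 \<le> hi" and r: "n + j1 \<in> R" "n + j2 \<in> R"
    and gap: "\<forall>j. j1 < j \<and> j < j2 \<longrightarrow> n + j \<notin> R"
  shows "{n + j1, n + j2} \<in> SE"
proof -
  define p where "p = map (\<lambda>j. n + j) [j1..<Suc j2]"
  have len: "length p = Suc j2 - j1" unfolding p_def length_map length_upt ..
  have nth: "i < length p \<Longrightarrow> p ! i = n + j1 + i" for i
  proof -
    assume "i < length p"
    then have "i < Suc j2 - j1" using len by simp
    then have "j1 + i < Suc j2" by linarith
    then have "[j1..<Suc j2] ! i = j1 + i" using nth_upt[of j1 i "Suc j2"] by (simp add: add.commute)
    moreover have "i < length [j1..<Suc j2]" using \<open>i < Suc j2 - j1\<close> by (simp del: upt_Suc)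
    ultimately show "p ! i = n + j1 + i" unfolding p_def by (simp del: upt_Suc add: nth_map)
  qed
  have "is_path ES (n + j1) (n + j2) p"
    unfolding is_path_def
  proof (intro conjI allI impI)
    show "p \<noteq> []" using j by (simp add: p_def)
    show "hd p = n + j1" using j by (simp add: p_def upt_rec)
    show "last p = n + j2" using j by (simp add: p_def)
    show "distinct p" by (simp add: p_def distinct_map inj_on_def)
    fix i assume i: "Suc i < length p"
    have e: "adj (n + j1 + i) (n + j1 + i + 1)"
      using i j hi_le len unfolding adj_def by auto
    have s: "n + (j1 + i) \<in> S" "n + (j1 + i + 1) \<in> S" using i j len by (intro spine_S; simp)+
    show "{p ! i, p ! Suc i} \<in> ES"
      using nth[of i] nth[of "Suc i"] i e s unfolding ES_def by (simp add: EE_iff add.assoc)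
  qed
  moreover have "\<forall>z\<in>set p. z \<noteq> n + j1 \<and> z \<noteq> n + j2 \<longrightarrow> z \<notin> R"
    using gap by (auto simp: p_def)
  ultimately show ?thesis unfolding SE_def using r j by fastforce
qed

lemma E3:
  assumes y: "y \<in> Y" "lo < kap y" "kap y < hi" and e: "{y, w} \<in> SE"
  shows "w = n + kap y"
proof (rule ccontr)
  assume ne: "w \<noteq> n + kap y"
  have yn: "y < n" using y Ysub by auto
  obtain p where p: "y \<noteq> w" "is_path ES y w p" "\<forall>z\<in>set p. z \<noteq> y \<and> z \<noteq> w \<longrightarrow> z \<notin> R"
    using SE_path[OF e] by blast
  have pE: "is_path EE y w p" using is_path_mono[OF p(2) ES_sub] .
  have f: "1 < length p \<and> p ! 1 = n + kap y" by (rule path_first_leaf[OF pE yn p(1)])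
  then have "n + kap y \<in> set p" by (metis nth_mem)
  moreover have "n + kap y \<noteq> y" using yn by simp
  ultimately have "n + kap y \<notin> R" using p(3) ne by blast
  then show False using mid_R[OF y] by simp
qed

lemma E4:
  assumes j: "lo \<le> j1" "j1 < j2" "j2 \<le> hi" and e: "{n + j1, n + j2} \<in> SE"
    and z: "z \<in> Y" "j1 < kap z" "kap z < j2"
  shows False
proof -
  obtain p where p: "is_path ES (n + j1) (n + j2) p"
    "\<forall>x\<in>set p. x \<noteq> n + j1 \<and> x \<noteq> n + j2 \<longrightarrow> x \<notin> R"
    using SE_path[OF e] by blast
  have pE: "is_path EE (n + j1) (n + j2) p" using is_path_mono[OF p(1) ES_sub] .
  have ne: "p \<noteq> []" "hd p = n + j1" "last p = n + j2" using pE by (auto simp: is_path_def)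
  obtain i where i: "i < length p" "kap (p ! i) = kap z"
    using path_ivt[OF pE, of "kap z"] z by auto
  have "i \<noteq> 0" using i z ne kap_spine by (metis hd_conv_nth less_irrefl)
  moreover have "i \<noteq> length p - 1" using i z ne kap_spine by (metis last_conv_nth less_irrefl)
  ultimately have "n \<le> p ! i" using i by (intro path_interior[OF pE]) auto
  then have pi: "p ! i = n + kap z" using spine_eq i(2) by metis
  have "p ! i \<notin> R" using p(2) i z pi nth_mem by (metis add_left_cancel less_irrefl)
  moreover have "n + kap z \<in> R" using mid_R z j by simp
  ultimately show False using pi by simp
qed

end


definition df :: "nat \<Rightarrow> nat \<Rightarrow> nat" where "df a b = max a b - min a b"

lemma sum_disjoint_intervals:
  fixes f g :: "'a \<Rightarrow> nat"
  assumes fin: "finite H" and le: "\<And>y. y \<in> H \<Longrightarrow> a \<le> f y \<and> f y \<le> g y \<and> g y \<le> b"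
    and dj: "\<And>y1 y2. y1 \<in> H \<Longrightarrow> y2 \<in> H \<Longrightarrow> y1 \<noteq> y2 \<Longrightarrow> {f y1..<g y1} \<inter> {f y2..<g y2} = {}"
  shows "(\<Sum>y\<in>H. g y - f y) \<le> b - a"
proof -
  have "(\<Sum>y\<in>H. g y - f y) = (\<Sum>y\<in>H. card {f y..<g y})" by simp
  also have "\<dots> = card (\<Union>y\<in>H. {f y..<g y})"
    by (rule card_UN_disjoint[symmetric]) (use fin dj in auto)
  also have "\<dots> \<le> card {a..<b}"
    by (rule card_mono) (use le in force)+
  finally show ?thesis by simp
qed

context cat begin

lemma att_bounds: "p < n \<Longrightarrow> att p \<le> p \<and> p \<le> att p + 2"
  unfolding att_def by auto

lemma fiber_le2: "card {x. x < n \<and> kap x = j} \<le> 2"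
proof (cases "j \<le> n - 3")
  case True
  then show ?thesis using kap_fiber_card att_fiber_card[OF True] by simp
next
  case False
  then have "{x. x < n \<and> kap x = j} = {}" using kap_leaf_le by force
  then show ?thesis by (metis card.empty le0)
qed

end

context catY begin

definition M where "M = {y \<in> Y. lo < kap y \<and> kap y < hi}"

lemma M_pos: "y \<in> M \<Longrightarrow> \<pi> y = kap y + 1"
proof -
  assume y: "y \<in> M"
  then have yn: "y < n" and k: "lo < kap y" "kap y < hi" using Ysub by (auto simp: M_def)
  have "kap y < n - 3" using k hi_le by simp
  moreover have "0 < kap y" using k by simp
  ultimately show ?thesis using k yn pi_lt[OF yn] unfolding kap_def att_def
    by (auto split: if_splits)
qed

lemma M_inj: "y1 \<in> M \<Longrightarrow> y2 \<in> M \<Longrightarrow> kap y1 = kap y2 \<Longrightarrow> y1 = y2"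
proof -
  assume y: "y1 \<in> M" "y2 \<in> M" "kap y1 = kap y2"
  have "y1 < n" "y2 < n" using y Ysub by (auto simp: M_def)
  moreover have "\<pi> y1 = \<pi> y2" using M_pos[OF y(1)] M_pos[OF y(2)] y(3) by simp
  ultimately show "y1 = y2" by (rule pi_inj)
qed

lemma M_sub: "M \<subseteq> Y" by (auto simp: M_def)

lemma card_notM: "card (Y - M) \<le> 4"
proof -
  have "Y - M \<subseteq> {x. x < n \<and> kap x = lo} \<union> {x. x < n \<and> kap x = hi}"
    using Ysub lo_hi by (force simp: M_def)
  then have "card (Y - M) \<le> card ({x. x < n \<and> kap x = lo} \<union> {x. x < n \<and> kap x = hi})"
    by (intro card_mono) auto
  also have "\<dots> \<le> card {x. x < n \<and> kap x = lo} + card {x. x < n \<and> kap x = hi}"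
    by (rule card_Un_le)
  also have "\<dots> \<le> 4" using fiber_le2[of lo] fiber_le2[of hi] by simp
  finally show ?thesis .
qed

definition nv where "nv y = Min {v \<in> kap ` Y. kap y < v}"
definition suc where "suc y = (SOME z. z \<in> Y \<and> kap z = nv y)"

lemma suc_props:
  assumes y: "y \<in> M"
  shows "suc y \<in> Y \<and> kap y < kap (suc y) \<and> (\<forall>z\<in>Y. kap y < kap z \<longrightarrow> kap (suc y) \<le> kap z)"
proof -
  have "hi \<in> kap ` Y" using finY Yne by (simp add: hi_def)
  moreover have "kap y < hi" using y by (simp add: M_def)
  ultimately have ne: "{v \<in> kap ` Y. kap y < v} \<noteq> {}" by auto
  have fin: "finite {v \<in> kap ` Y. kap y < v}" using finY by simp
  have "nv y \<in> {v \<in> kap ` Y. kap y < v}" unfolding nv_def using Min_in[OF fin ne] .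
  then have ex: "\<exists>z. z \<in> Y \<and> kap z = nv y" by auto
  have s: "suc y \<in> Y \<and> kap (suc y) = nv y" unfolding suc_def using someI_ex[OF ex] .
  have "kap y < nv y" using \<open>nv y \<in> _\<close> by simp
  moreover have "\<forall>z\<in>Y. kap y < kap z \<longrightarrow> nv y \<le> kap z"
    unfolding nv_def using fin by (auto intro: Min_le)
  ultimately show ?thesis using s by simp
qed

lemma suc_inj: "y1 \<in> M \<Longrightarrow> y2 \<in> M \<Longrightarrow> suc y1 = suc y2 \<Longrightarrow> y1 = y2"
proof -
  assume y: "y1 \<in> M" "y2 \<in> M" "suc y1 = suc y2"
  have "kap y1 = kap y2"
  proof (rule ccontr)
    assume "kap y1 \<noteq> kap y2"
    then consider "kap y1 < kap y2" | "kap y2 < kap y1" by linarith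
    then show False
    proof cases
      case 1
      then have "kap (suc y1) \<le> kap y2" using suc_props[OF y(1)] y(2) M_sub by blast
      then show False using suc_props[OF y(2)] y(3) by simp
    next
      case 2
      then have "kap (suc y2) \<le> kap y1" using suc_props[OF y(2)] y(1) M_sub by blast
      then show False using suc_props[OF y(1)] y(3) by simp
    qed
  qed
  then show "y1 = y2" using M_inj y by simp
qed

end


locale two = C1: catY n p1 Y + C2: catY n p2 Y for n p1 p2 Y +
  fixes m :: nat
  assumes grid: "\<And>x x'. x < n \<Longrightarrow> x' < n \<Longrightarrow> x \<noteq> x' \<Longrightarrow> m - 1 \<le> df (p1 x) (p1 x') + df (p2 x) (p2 x')"
  and iso: "iso_fixing Y (restrict_tree (cat.TT n p1) Y) (restrict_tree (cat.TT n p2) Y)"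
begin

definition G where "G = C1.M \<inter> C2.M"
definition H where "H = {y \<in> G. C1.suc y \<in> G}"

lemma iso_f: obtains f where "\<forall>y\<in>Y. f y = y"
  "\<forall>u\<in>C1.R. \<forall>w\<in>C1.R. {u, w} \<in> C1.SE \<longleftrightarrow> {f u, f w} \<in> C2.SE"
  using iso unfolding iso_fixing_def C1.restrict_eq C2.restrict_eq by auto

lemma leaf_map:
  assumes y: "y \<in> C1.M" "y \<in> C2.M" and f: "\<forall>y\<in>Y. f y = y"
    "\<forall>u\<in>C1.R. \<forall>w\<in>C1.R. {u, w} \<in> C1.SE \<longleftrightarrow> {f u, f w} \<in> C2.SE"
  shows "f (n + C1.kap y) = n + C2.kap y"
proof -
  have yY: "y \<in> Y" using y C1.M_sub by auto
  have r: "n + C1.kap y \<in> C1.R" using C1.mid_R yY y(1) by (simp add: C1.M_def)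
  have "{y, n + C1.kap y} \<in> C1.SE" by (rule C1.E1[OF yY r])
  then have "{f y, f (n + C1.kap y)} \<in> C2.SE" using f(2) r C1.leaf_R[OF yY] by blast
  then have "{y, f (n + C1.kap y)} \<in> C2.SE" using f(1) yY by simp
  then show ?thesis using C2.E3[OF yY] y(2) by (simp add: C2.M_def)
qed

lemma consec:
  assumes y: "y \<in> H" and z: "z \<in> Y"
  shows "\<not> (min (C2.kap y) (C2.kap (C1.suc y)) < C2.kap z \<and> C2.kap z < max (C2.kap y) (C2.kap (C1.suc y)))"
proof
  assume zb: "min (C2.kap y) (C2.kap (C1.suc y)) < C2.kap z \<and> C2.kap z < max (C2.kap y) (C2.kap (C1.suc y))"
  define y' where "y' = C1.suc y"
  have yG: "y \<in> G" "y' \<in> G" using y by (auto simp: H_def y'_def)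
  have yM: "y \<in> C1.M" "y \<in> C2.M" "y' \<in> C1.M" "y' \<in> C2.M" using yG by (auto simp: G_def)
  have yY: "y \<in> Y" "y' \<in> Y" using yM C1.M_sub by auto
  have sp: "y' \<in> Y \<and> C1.kap y < C1.kap y' \<and> (\<forall>z\<in>Y. C1.kap y < C1.kap z \<longrightarrow> C1.kap y' \<le> C1.kap z)"
    using C1.suc_props[OF yM(1)] by (simp add: y'_def)
  obtain f where f: "\<forall>y\<in>Y. f y = y"
    "\<forall>u\<in>C1.R. \<forall>w\<in>C1.R. {u, w} \<in> C1.SE \<longleftrightarrow> {f u, f w} \<in> C2.SE" by (rule iso_f)
  have r1: "n + C1.kap y \<in> C1.R" "n + C1.kap y' \<in> C1.R"
    using C1.mid_R yY yM by (auto simp: C1.M_def)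
  have "{n + C1.kap y, n + C1.kap y'} \<in> C1.SE"
  proof (rule C1.E2)
    show "C1.lo \<le> C1.kap y" "C1.kap y' \<le> C1.hi" using C1.lo_hi yY by auto
    show "C1.kap y < C1.kap y'" using sp by simp
    show "n + C1.kap y \<in> C1.R" "n + C1.kap y' \<in> C1.R" by (rule r1)+
    show "\<forall>j. C1.kap y < j \<and> j < C1.kap y' \<longrightarrow> n + j \<notin> C1.R"
    proof (intro allI impI)
      fix j assume j: "C1.kap y < j \<and> j < C1.kap y'"
      show "n + j \<notin> C1.R"
      proof (rule C1.gap_notR)
        show "C1.lo < j" "j < C1.hi" using j C1.lo_hi yY by (meson le_less_trans less_le_trans)+
        show "\<forall>y\<in>Y. C1.kap y \<noteq> j" using j sp by (metis not_le)
      qed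
    qed
  qed
  then have "{f (n + C1.kap y), f (n + C1.kap y')} \<in> C2.SE" using f(2) r1 by blast
  moreover have "f (n + C1.kap y) = n + C2.kap y" "f (n + C1.kap y') = n + C2.kap y'"
    using leaf_map[OF _ _ f] yM by auto
  ultimately have e: "{n + C2.kap y, n + C2.kap y'} \<in> C2.SE" by simp
  have ne: "C2.kap y \<noteq> C2.kap y'"
  proof
    assume "C2.kap y = C2.kap y'"
    then have "y = y'" using C2.M_inj yM by blast
    then show False using sp by simp
  qed
  define j1 where "j1 = min (C2.kap y) (C2.kap y')"
  define j2 where "j2 = max (C2.kap y) (C2.kap y')"
  have e': "{n + j1, n + j2} \<in> C2.SE" using e
    by (cases "C2.kap y \<le> C2.kap y'") (auto simp: j1_def j2_def insert_commute)
  show False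
  proof (rule C2.E4[OF _ _ _ e' z])
    show "C2.lo \<le> j1" "j2 \<le> C2.hi" using C2.lo_hi yY by (auto simp: j1_def j2_def)
    show "j1 < j2" using ne by (auto simp: j1_def j2_def)
    show "j1 < C2.kap z" "C2.kap z < j2" using zb by (auto simp: j1_def j2_def y'_def)
  qed
qed


lemma finG: "finite G" using C1.finY C1.M_sub by (auto simp: G_def intro: finite_subset)

lemma card_H: "card Y \<le> card H + 16"
proof -
  have GY: "G \<subseteq> Y" using C1.M_sub by (auto simp: G_def)
  have c1: "card (Y - G) \<le> 8"
  proof -
    have "Y - G = (Y - C1.M) \<union> (Y - C2.M)" by (auto simp: G_def)
    then have "card (Y - G) \<le> card (Y - C1.M) + card (Y - C2.M)" by (metis card_Un_le)
    then show ?thesis using C1.card_notM C2.card_notM by simp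
  qed
  have c2: "card Y = card G + card (Y - G)"
    using GY C1.finY by (metis card_Diff_subset card_mono le_add_diff_inverse finite_subset)
  define B where "B = {y \<in> G. C1.suc y \<notin> G}"
  have GHB: "G = H \<union> B" "H \<inter> B = {}" by (auto simp: H_def B_def)
  have finH: "finite H" "finite B" using finG GHB by (metis finite_Un)+
  have c3: "card G = card H + card B" using GHB finH by (simp add: card_Un_disjoint)
  have "card B \<le> card (Y - G)"
  proof (rule card_inj_on_le)
    show "inj_on C1.suc B" using C1.suc_inj by (auto simp: inj_on_def B_def G_def)
    show "C1.suc ` B \<subseteq> Y - G" using C1.suc_props by (auto simp: B_def G_def)
    show "finite (Y - G)" using C1.finY by simp
  qed
  then show ?thesis using c1 c2 c3 by linarith
qed

lemma H_term:
  assumes y: "y \<in> H"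
  shows "m - 1 \<le> (C1.kap (C1.suc y) - C1.kap y) + (max (C2.kap y) (C2.kap (C1.suc y)) - min (C2.kap y) (C2.kap (C1.suc y)))"
proof -
  define y' where "y' = C1.suc y"
  have yM: "y \<in> C1.M" "y \<in> C2.M" "y' \<in> C1.M" "y' \<in> C2.M" using y by (auto simp: H_def G_def y'_def)
  have yY: "y \<in> Y" "y' \<in> Y" using yM C1.M_sub by auto
  have lt: "C1.kap y < C1.kap y'" using C1.suc_props[OF yM(1)] by (simp add: y'_def)
  have yn: "y < n" "y' < n" using yY C1.Ysub by auto
  have "y \<noteq> y'" using lt by auto
  then have g: "m - 1 \<le> df (p1 y) (p1 y') + df (p2 y) (p2 y')" using grid yn by blast
  have "df (p1 y) (p1 y') = C1.kap y' - C1.kap y" using C1.M_pos yM lt by (simp add: df_def)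
  moreover have "df (p2 y) (p2 y') = max (C2.kap y) (C2.kap y') - min (C2.kap y) (C2.kap y')"
    using C2.M_pos yM by (simp add: df_def)
  ultimately have eq: "df (p1 y) (p1 y') + df (p2 y) (p2 y') = (C1.kap y' - C1.kap y) + (max (C2.kap y) (C2.kap y') - min (C2.kap y) (C2.kap y'))"
    by (simp only:)
  show ?thesis unfolding y'_def[symmetric] using g eq by (simp only:)
qed

lemma H_sum: "card H * (m - 1) \<le> (C1.hi - C1.lo) + (C2.hi - C2.lo)"
proof -
  have finH: "finite H" using finG by (auto simp: H_def)
  have HY: "y \<in> H \<Longrightarrow> y \<in> Y \<and> C1.suc y \<in> Y \<and> y \<in> C1.M \<and> y \<in> C2.M \<and> C1.suc y \<in> C1.M \<and> C1.suc y \<in> C2.M" for y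
    using C1.M_sub by (auto simp: H_def G_def)
  have s1: "(\<Sum>y\<in>H. C1.kap (C1.suc y) - C1.kap y) \<le> C1.hi - C1.lo"
  proof (rule sum_disjoint_intervals[OF finH])
    fix y assume "y \<in> H"
    then show "C1.lo \<le> C1.kap y \<and> C1.kap y \<le> C1.kap (C1.suc y) \<and> C1.kap (C1.suc y) \<le> C1.hi"
      using HY C1.lo_hi C1.suc_props by (meson less_imp_le)
  next
    fix y1 y2 assume y: "y1 \<in> H" "y2 \<in> H" "y1 \<noteq> y2"
    have "C1.kap y1 \<noteq> C1.kap y2" using C1.M_inj HY y by blast
    then consider "C1.kap y1 < C1.kap y2" | "C1.kap y2 < C1.kap y1" by linarith
    then show "{C1.kap y1..<C1.kap (C1.suc y1)} \<inter> {C1.kap y2..<C1.kap (C1.suc y2)} = {}"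
    proof cases
      case 1
      then have "C1.kap (C1.suc y1) \<le> C1.kap y2" using C1.suc_props HY y by blast
      then show ?thesis by auto
    next
      case 2
      then have "C1.kap (C1.suc y2) \<le> C1.kap y1" using C1.suc_props HY y by blast
      then show ?thesis by auto
    qed
  qed
  let ?a = "\<lambda>y. min (C2.kap y) (C2.kap (C1.suc y))"
  let ?b = "\<lambda>y. max (C2.kap y) (C2.kap (C1.suc y))"
  have s2: "(\<Sum>y\<in>H. ?b y - ?a y) \<le> C2.hi - C2.lo"
  proof (rule sum_disjoint_intervals[OF finH])
    fix y assume "y \<in> H"
    then show "C2.lo \<le> ?a y \<and> ?a y \<le> ?b y \<and> ?b y \<le> C2.hi"
      using HY C2.lo_hi by (simp add: min_def max_def)
  next
    fix y1 y2 assume y: "y1 \<in> H" "y2 \<in> H" "y1 \<noteq> y2"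
    show "{?a y1..<?b y1} \<inter> {?a y2..<?b y2} = {}"
    proof (rule ccontr)
      assume "{?a y1..<?b y1} \<inter> {?a y2..<?b y2} \<noteq> {}"
      then obtain t where "t \<in> {?a y1..<?b y1} \<inter> {?a y2..<?b y2}" by blast
      then have t: "?a y1 \<le> t" "t < ?b y1" "?a y2 \<le> t" "t < ?b y2" by auto
      have c1: "\<And>z. z \<in> Y \<Longrightarrow> \<not> (?a y1 < C2.kap z \<and> C2.kap z < ?b y1)" using consec y(1) by blast
      have c2: "\<And>z. z \<in> Y \<Longrightarrow> \<not> (?a y2 < C2.kap z \<and> C2.kap z < ?b y2)" using consec y(2) by blast
      have a1: "\<exists>z\<in>{y1, C1.suc y1}. C2.kap z = ?a y1" "\<exists>z\<in>{y1, C1.suc y1}. C2.kap z = ?b y1"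
        "\<exists>z\<in>{y2, C1.suc y2}. C2.kap z = ?a y2" "\<exists>z\<in>{y2, C1.suc y2}. C2.kap z = ?b y2"
        by (auto simp: min_def max_def)
      have inY: "{y1, C1.suc y1, y2, C1.suc y2} \<subseteq> Y" using HY y by auto
      have ea: "?a y1 = ?a y2"
      proof (rule ccontr)
        assume "?a y1 \<noteq> ?a y2"
        then consider "?a y1 < ?a y2" | "?a y2 < ?a y1" by linarith
        then show False
        proof cases
          case 1
          obtain z where z: "z \<in> {y2, C1.suc y2}" "C2.kap z = ?a y2" using a1(3) by blast
          then show False using c1[of z] inY t 1 by auto
        next
          case 2
          obtain z where z: "z \<in> {y1, C1.suc y1}" "C2.kap z = ?a y1" using a1(1) by blast
          then show False using c2[of z] inY t 2 by auto
        qed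
      qed
      have eb: "?b y1 = ?b y2"
      proof (rule ccontr)
        assume "?b y1 \<noteq> ?b y2"
        then consider "?b y1 < ?b y2" | "?b y2 < ?b y1" by linarith
        then show False
        proof cases
          case 1
          obtain z where z: "z \<in> {y1, C1.suc y1}" "C2.kap z = ?b y1" using a1(2) by blast
          then show False using c2[of z] inY t 1 by auto
        next
          case 2
          obtain z where z: "z \<in> {y2, C1.suc y2}" "C2.kap z = ?b y2" using a1(4) by blast
          then show False using c1[of z] inY t 2 by auto
        qed
      qed
      have M2: "y1 \<in> C2.M" "C1.suc y1 \<in> C2.M" "y2 \<in> C2.M" "C1.suc y2 \<in> C2.M" using HY y by auto
      have l1: "C1.kap y1 < C1.kap (C1.suc y1)" "C1.kap y2 < C1.kap (C1.suc y2)"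
        using C1.suc_props HY y by blast+
      have inj2: "\<And>u v. u \<in> C2.M \<Longrightarrow> v \<in> C2.M \<Longrightarrow> C2.kap u = C2.kap v \<Longrightarrow> u = v" using C2.M_inj by blast
      have "{C2.kap y1, C2.kap (C1.suc y1)} = {?a y1, ?b y1}" "{C2.kap y2, C2.kap (C1.suc y2)} = {?a y2, ?b y2}"
        by (auto simp: min_def max_def)
      then have "{C2.kap y1, C2.kap (C1.suc y1)} = {C2.kap y2, C2.kap (C1.suc y2)}" using ea eb by simp
      then have "(C2.kap y1 = C2.kap y2 \<and> C2.kap (C1.suc y1) = C2.kap (C1.suc y2)) \<or>
                 (C2.kap y1 = C2.kap (C1.suc y2) \<and> C2.kap (C1.suc y1) = C2.kap y2)"
        by (auto simp: doubleton_eq_iff)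
      then show False
      proof
        assume "C2.kap y1 = C2.kap y2 \<and> C2.kap (C1.suc y1) = C2.kap (C1.suc y2)"
        then have "y1 = y2" using inj2 M2 by blast
        then show False using y by simp
      next
        assume h: "C2.kap y1 = C2.kap (C1.suc y2) \<and> C2.kap (C1.suc y1) = C2.kap y2"
        then have "y1 = C1.suc y2" "C1.suc y1 = y2" using inj2 M2 by blast+
        then show False using l1 by simp
      qed
    qed
  qed
  have "card H * (m - 1) = (\<Sum>y\<in>H. m - 1)" by simp
  also have "\<dots> \<le> (\<Sum>y\<in>H. (C1.kap (C1.suc y) - C1.kap y) + (?b y - ?a y))"
    by (rule sum_mono) (rule H_term)
  also have "\<dots> = (\<Sum>y\<in>H. C1.kap (C1.suc y) - C1.kap y) + (\<Sum>y\<in>H. ?b y - ?a y)"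
    by (rule sum.distrib)
  finally show ?thesis using s1 s2 by linarith
qed

lemma len_lower: "m - 5 \<le> (C1.hi - C1.lo) + (C2.hi - C2.lo)"
proof -
  obtain y where y: "y \<in> Y" using C1.Yne by blast
  have "card (Y - {y}) \<noteq> 0" using C1.Y2 C1.finY y by simp
  then have "Y - {y} \<noteq> {}" by (metis card.empty)
  then obtain y' where "y' \<in> Y - {y}" by blast
  then have yy: "y \<in> Y" "y' \<in> Y" "y \<noteq> y'" using y by auto
  have yn: "y < n" "y' < n" using yy C1.Ysub by auto
  have g: "m - 1 \<le> df (p1 y) (p1 y') + df (p2 y) (p2 y')" using grid yn yy(3) by blast
  have k1: "df (p1 y) (p1 y') \<le> (C1.hi - C1.lo) + 2"
  proof -
    have "C1.att (p1 y) \<le> p1 y \<and> p1 y \<le> C1.att (p1 y) + 2" "C1.att (p1 y') \<le> p1 y' \<and> p1 y' \<le> C1.att (p1 y') + 2"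
      using C1.att_bounds C1.pi_lt yn by blast+
    moreover have "C1.kap y = C1.att (p1 y)" "C1.kap y' = C1.att (p1 y')" using yn by (simp_all add: C1.kap_def)
    moreover have "C1.lo \<le> C1.kap y" "C1.kap y \<le> C1.hi" "C1.lo \<le> C1.kap y'" "C1.kap y' \<le> C1.hi"
      using C1.lo_hi yy by auto
    ultimately show ?thesis unfolding df_def by linarith
  qed
  have k2: "df (p2 y) (p2 y') \<le> (C2.hi - C2.lo) + 2"
  proof -
    have "C2.att (p2 y) \<le> p2 y \<and> p2 y \<le> C2.att (p2 y) + 2" "C2.att (p2 y') \<le> p2 y' \<and> p2 y' \<le> C2.att (p2 y') + 2"
      using C2.att_bounds C2.pi_lt yn by blast+
    moreover have "C2.kap y = C2.att (p2 y)" "C2.kap y' = C2.att (p2 y')" using yn by (simp_all add: C2.kap_def)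
    moreover have "C2.lo \<le> C2.kap y" "C2.kap y \<le> C2.hi" "C2.lo \<le> C2.kap y'" "C2.kap y' \<le> C2.hi"
      using C2.lo_hi yy by auto
    ultimately show ?thesis unfolding df_def by linarith
  qed
  show ?thesis using g k1 k2 by linarith
qed

lemma comp_bound: "(card Y - 1) * (m - 5) \<le> 16 * ((C1.hi - C1.lo) + (C2.hi - C2.lo))"
proof -
  define L where "L = (C1.hi - C1.lo) + (C2.hi - C2.lo)"
  have a: "(card Y - 16) * (m - 1) \<le> L"
  proof -
    have "card Y - 16 \<le> card H" using card_H by linarith
    then have "(card Y - 16) * (m - 1) \<le> card H * (m - 1)" by (rule mult_right_mono) simp
    from order_trans[OF this H_sum] show ?thesis unfolding L_def .
  qed
  have b: "m - 5 \<le> L" using len_lower by (simp add: L_def)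
  have "(card Y - 1) * (m - 5) \<le> ((card Y - 16) + 15) * (m - 5)" by (rule mult_right_mono) auto
  also have "\<dots> = (card Y - 16) * (m - 5) + 15 * (m - 5)" by (simp add: algebra_simps)
  also have "\<dots> \<le> (card Y - 16) * (m - 1) + 15 * L"
    using b by (intro add_mono mult_left_mono) auto
  also have "\<dots> \<le> 16 * L" using a by simp
  finally show ?thesis by (simp add: L_def)
qed

end


definition sig :: "nat \<Rightarrow> nat \<Rightarrow> nat" where "sig m x = (x mod m) * m + x div m"

lemma sig_lt: "0 < m \<Longrightarrow> x < m * m \<Longrightarrow> sig m x < m * m"
proof -
  assume m: "0 < m" and x: "x < m * m"
  have "x div m < m" using x m by (simp add: div_less_iff_less_mult)
  moreover have "x mod m \<le> m - 1" using m by (metis Suc_pred' le_simps(2) mod_less_divisor)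
  ultimately have "(x mod m) * m + x div m < (m - 1) * m + m"
    by (metis add_le_less_mono mult_le_mono1)
  also have "\<dots> = m * m" using m by (cases m) auto
  finally show ?thesis by (simp add: sig_def)
qed

lemma sig_sig: "0 < m \<Longrightarrow> x < m * m \<Longrightarrow> sig m (sig m x) = x"
proof -
  assume m: "0 < m" and x: "x < m * m"
  have d: "x div m < m" using x m by (simp add: div_less_iff_less_mult)
  have "sig m x mod m = x div m" using d m by (simp add: sig_def)
  moreover have "sig m x div m = x mod m" using d m by (simp add: sig_def)
  ultimately show ?thesis by (simp add: sig_def mult.commute)
qed

lemma sig_bij: "0 < m \<Longrightarrow> bij_betw (sig m) {..<m * m} {..<m * m}"
  by (rule bij_betw_byWitness[where f' = "sig m"]) (auto simp: sig_sig sig_lt)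

lemma sig_close:
  assumes m: "0 < m" and xx: "x < x'" "x' < m * m" "x' < x + m"
  shows "m - 1 \<le> df (sig m x) (sig m x')"
proof -
  define a where "a = x div m"
  define b where "b = x mod m"
  define a' where "a' = x' div m"
  define b' where "b' = x' mod m"
  have x: "x = a * m + b" "b < m" using m by (simp_all add: a_def b_def)
  have x': "x' = a' * m + b'" "b' < m" using m by (simp_all add: a'_def b'_def)
  have "a \<le> a'" using xx by (simp add: a_def a'_def div_le_mono)
  have "a' * m < (a + 2) * m" using x x' xx by (simp add: algebra_simps)
  then have "a' < a + 2" by (metis mult_less_cancel2)
  have s: "sig m x = b * m + a" "sig m x' = b' * m + a'" by (simp_all add: sig_def a_def b_def a'_def b'_def)
  show ?thesis
  proof (cases "a' = a")
    case True
    then have "b < b'" using x x' xx by simp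
    then have "(b + 1) * m \<le> b' * m" by (intro mult_right_mono) auto
    then show ?thesis using s True by (simp add: df_def algebra_simps)
  next
    case False
    then have a': "a' = a + 1" using \<open>a \<le> a'\<close> \<open>a' < a + 2\<close> by simp
    then have "b' < b" using x x' xx by (simp add: algebra_simps)
    then have "(b' + 1) * m \<le> b * m" by (intro mult_right_mono) auto
    then show ?thesis using s a' by (simp add: df_def algebra_simps)
  qed
qed

lemma df_sym: "df a b = df b a" by (simp add: df_def max.commute min.commute)

lemma sig_grid:
  assumes m: "0 < m" and xx: "x < m * m" "x' < m * m" "x \<noteq> x'"
  shows "m - 1 \<le> df (id x) (id x') + df (sig m x) (sig m x')"
proof -
  have main: "m - 1 \<le> df u u' + df (sig m u) (sig m u')" if "u < u'" "u' < m * m" for u u'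
  proof (cases "u' < u + m")
    case True then show ?thesis using sig_close[OF m that True] by simp
  next
    case False then show ?thesis by (simp add: df_def)
  qed
  show ?thesis
  proof (cases "x < x'")
    case True then show ?thesis using main xx by simp
  next
    case False
    then have "x' < x" using xx by simp
    then show ?thesis using main[of x' x] xx by (simp add: df_sym)
  qed
qed


definition lenY :: "nat \<Rightarrow> (nat \<Rightarrow> nat) \<Rightarrow> nat set \<Rightarrow> nat" where
  "lenY n p Y = (if 2 \<le> card Y then catY.hi n p Y - catY.lo n p Y else 0)"

context cat begin

lemma big_facts:
  assumes "Y \<subseteq> {..<n}" "2 \<le> card Y"
  shows "catY.hi n \<pi> Y \<le> n - 3"
    "\<And>j. catY.lo n \<pi> Y \<le> j \<Longrightarrow> j \<le> catY.hi n \<pi> Y \<Longrightarrow> n + j \<in> span_vertices TT Y"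
    "catY.lo n \<pi> Y \<le> catY.hi n \<pi> Y"
proof -
  interpret catY n \<pi> Y by unfold_locales (use assms in auto)
  show "hi \<le> n - 3" by (rule hi_le)
  show "\<And>j. lo \<le> j \<Longrightarrow> j \<le> hi \<Longrightarrow> n + j \<in> span_vertices TT Y" using spine_S by (simp add: S_def)
  obtain y where "y \<in> Y" using Yne by blast
  then show "lo \<le> hi" using lo_hi by fastforce
qed

lemma sum_len:
  assumes fin: "finite F" and sub: "\<forall>Y\<in>F. Y \<subseteq> {..<n}"
    and dj: "\<forall>Y\<in>F. \<forall>Y'\<in>F. Y \<noteq> Y' \<longrightarrow> span_vertices TT Y \<inter> span_vertices TT Y' = {}"
  shows "(\<Sum>Y\<in>F. lenY n \<pi> Y) \<le> n"
proof -
  define J where "J Y = (if 2 \<le> card Y then {n + catY.lo n \<pi> Y .. n + catY.hi n \<pi> Y} else {})" for Y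
  have JS: "J Y \<subseteq> span_vertices TT Y" if "Y \<in> F" for Y
  proof
    fix v assume v: "v \<in> J Y"
    then have c: "2 \<le> card Y" by (auto simp: J_def split: if_splits)
    then have "v = n + (v - n)" "catY.lo n \<pi> Y \<le> v - n" "v - n \<le> catY.hi n \<pi> Y"
      using v by (auto simp: J_def)
    then show "v \<in> span_vertices TT Y" using big_facts(2)[OF _ c, of "v - n"] sub that by metis
  qed
  have Jsub: "J Y \<subseteq> {n..<n + (n - 2)}" if "Y \<in> F" for Y
    using big_facts(1)[of Y] sub that n4 by (auto simp: J_def)
  have "(\<Sum>Y\<in>F. lenY n \<pi> Y) \<le> (\<Sum>Y\<in>F. card (J Y))"
    by (rule sum_mono) (auto simp: lenY_def J_def)
  also have "\<dots> = card (\<Union>Y\<in>F. J Y)"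
  proof (rule card_UN_disjoint[symmetric])
    show "finite F" by (rule fin)
    show "\<forall>i\<in>F. finite (J i)" by (auto simp: J_def)
    show "\<forall>i\<in>F. \<forall>j\<in>F. i \<noteq> j \<longrightarrow> J i \<inter> J j = {}"
      using JS dj by blast
  qed
  also have "\<dots> \<le> card {n..<n + (n - 2)}" by (rule card_mono) (use Jsub in auto)
  finally show ?thesis by simp
qed

end

lemma comp_bound_global:
  assumes m: "10 \<le> m" and Y: "Y \<subseteq> {..<m * m}"
    and iso: "iso_fixing Y (restrict_tree (cat.TT (m * m) id) Y) (restrict_tree (cat.TT (m * m) (sig m)) Y)"
  shows "(card Y - 1) * (m - 5) \<le> 16 * (lenY (m * m) id Y + lenY (m * m) (sig m) Y)"
proof (cases "2 \<le> card Y")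
  case False
  then have "card Y - 1 = 0" by simp
  then show ?thesis by simp
next
  case True
  have "10 * 10 \<le> m * m" using mult_le_mono[OF m m] .
  then have n4: "4 \<le> m * m" by simp
  interpret two "m * m" id "sig m" Y m
  proof unfold_locales
    show "4 \<le> m * m" by (rule n4)
    show "bij_betw id {..<m * m} {..<m * m}" by simp
    show "bij_betw (sig m) {..<m * m} {..<m * m}" using m by (intro sig_bij) simp
    show "Y \<subseteq> {..<m * m}" "2 \<le> card Y" by (fact Y, fact True)+
    show "\<And>x x'. x < m * m \<Longrightarrow> x' < m * m \<Longrightarrow> x \<noteq> x' \<Longrightarrow> m - 1 \<le> df (id x) (id x') + df (sig m x) (sig m x')"
      using m by (intro sig_grid) auto
    show "iso_fixing Y (restrict_tree (cat.TT (m * m) id) Y) (restrict_tree (cat.TT (m * m) (sig m)) Y)" by (rule iso)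
  qed
  show ?thesis using comp_bound True by (simp add: lenY_def)
qed


lemma forest_bound:
  assumes m: "10 \<le> m"
    and af: "agreement_forest {..<m * m} (cat.TT (m * m) id) (cat.TT (m * m) (sig m)) F"
  shows "real (m * m) - 64 * real m \<le> real (card F)"
proof -
  define n where "n = m * m"
  have "10 * 10 \<le> m * m" using mult_le_mono[OF m m] .
  then have n4: "4 \<le> n" by (simp add: n_def)
  interpret A: cat n id by unfold_locales (use n4 in auto)
  interpret B: cat n "sig m" by unfold_locales (use n4 m sig_bij in \<open>auto simp: n_def\<close>)
  have pa: "partition_on {..<n} F" using af by (simp add: agreement_forest_def n_def)
  have finF: "finite F" using finite_elements[OF _ pa] by simp
  have sub: "\<forall>Y\<in>F. Y \<subseteq> {..<n}" using pa by (auto simp: partition_on_def)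
  have finY: "\<And>Y. Y \<in> F \<Longrightarrow> finite Y" using sub finite_subset by blast
  have ne: "\<And>Y. Y \<in> F \<Longrightarrow> Y \<noteq> {}" using pa by (auto simp: partition_on_def)
  have sc: "n = (\<Sum>Y\<in>F. card Y)" using product_partition[OF pa finY] by simp
  have s1: "(\<Sum>Y\<in>F. card Y - 1) + card F = n"
  proof -
    have "(\<Sum>Y\<in>F. card Y - 1 + 1) = (\<Sum>Y\<in>F. card Y - 1) + (\<Sum>Y\<in>F. 1)" by (rule sum.distrib)
    then have "(\<Sum>Y\<in>F. card Y - 1) + card F = (\<Sum>Y\<in>F. card Y - 1 + 1)" by simp
    also have "\<dots> = (\<Sum>Y\<in>F. card Y)"
      by (rule sum.cong) (use finY ne in \<open>auto simp: card_gt_0_iff Suc_leI\<close>)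
    finally show ?thesis using sc by simp
  qed
  have dj1: "\<forall>Y\<in>F. \<forall>Y'\<in>F. Y \<noteq> Y' \<longrightarrow> span_vertices A.TT Y \<inter> span_vertices A.TT Y' = {}"
    using af by (simp add: agreement_forest_def n_def)
  have dj2: "\<forall>Y\<in>F. \<forall>Y'\<in>F. Y \<noteq> Y' \<longrightarrow> span_vertices B.TT Y \<inter> span_vertices B.TT Y' = {}"
    using af by (simp add: agreement_forest_def n_def)
  have iso: "\<forall>Y\<in>F. iso_fixing Y (restrict_tree A.TT Y) (restrict_tree B.TT Y)"
    using af by (simp add: agreement_forest_def n_def)
  have "(\<Sum>Y\<in>F. card Y - 1) * (m - 5) = (\<Sum>Y\<in>F. (card Y - 1) * (m - 5))"
    by (simp add: sum_distrib_right)
  also have "\<dots> \<le> (\<Sum>Y\<in>F. 16 * (lenY n id Y + lenY n (sig m) Y))"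
    by (rule sum_mono) (use comp_bound_global[OF m] sub iso in \<open>auto simp: n_def\<close>)
  also have "\<dots> = 16 * ((\<Sum>Y\<in>F. lenY n id Y) + (\<Sum>Y\<in>F. lenY n (sig m) Y))"
    by (simp add: sum_distrib_left sum.distrib)
  also have "\<dots> \<le> 16 * (n + n)"
    using A.sum_len[OF finF sub dj1] B.sum_len[OF finF sub dj2] by simp
  finally have k0: "(\<Sum>Y\<in>F. card Y - 1) * (m - 5) \<le> 32 * n" by simp
  have "n - card F = (\<Sum>Y\<in>F. card Y - 1)" using s1 by linarith
  then have k: "(n - card F) * (m - 5) \<le> 32 * n" using k0 by simp
  have "32 * n \<le> (64 * m) * (m - 5)"
  proof -
    obtain k where km: "m = k + 10" using m by (metis add.commute le_Suc_ex)
    have "m - 5 = k + 5" using km by simp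
    then show ?thesis unfolding n_def km by (simp add: algebra_simps)
  qed
  then have "(n - card F) * (m - 5) \<le> (64 * m) * (m - 5)" using k by linarith
  then have "n - card F \<le> 64 * m" using m by simp
  then have "real n - 64 * real m \<le> real (card F)" by linarith
  then show ?thesis by (simp add: n_def)
qed


theorem lemma8:
  shows "\<exists>(P :: (nat set \<times> nat graph \<times> nat graph) set) (g :: nat \<Rightarrow> real).
     infinite {card X | X T1 T2. (X, T1, T2) \<in> P} \<and>
     (\<lambda>n. g n / real n) \<longlonglongrightarrow> 0 \<and>
     (\<forall>(X, T1, T2) \<in> P. finite X \<and> phylo_tree X T1 \<and> phylo_tree X T2 \<and>
        (\<forall>F. agreement_forest X T1 T2 F \<longrightarrow>
             real (card F) \<ge> real (card X) - g (card X)))"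
proof (intro exI conjI)
  define P :: "(nat set \<times> nat graph \<times> nat graph) set" where
    "P = {({..<m * m}, cat.TT (m * m) id, cat.TT (m * m) (sig m)) | m. 10 \<le> m}"
  define g :: "nat \<Rightarrow> real" where "g = (\<lambda>n. 64 * sqrt (real n))"
  have eq: "{card X | X T1 T2. (X, T1, T2) \<in> P} = (\<lambda>m. m * m) ` {10..}"
  proof
    show "{card X | X T1 T2. (X, T1, T2) \<in> P} \<subseteq> (\<lambda>m. m * m) ` {10..}"
      unfolding P_def by auto
    show "(\<lambda>m. m * m) ` {10..} \<subseteq> {card X | X T1 T2. (X, T1, T2) \<in> P}"
    proof
      fix k assume "k \<in> (\<lambda>m::nat. m * m) ` {10..}"
      then obtain m where m: "10 \<le> m" "k = m * m" by auto
      have "({..<m * m}, cat.TT (m * m) id, cat.TT (m * m) (sig m)) \<in> P"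
        unfolding P_def using m(1) by blast
      moreover have "card {..<m * m} = k" using m by simp
      ultimately show "k \<in> {card X | X T1 T2. (X, T1, T2) \<in> P}" by blast
    qed
  qed
  have "strict_mono (\<lambda>m::nat. m * m)"
    by (rule strict_monoI) (simp add: mult_strict_mono)
  then have "inj_on (\<lambda>m::nat. m * m) {10..}" using strict_mono_imp_inj_on by blast
  moreover have "infinite {10::nat..}" by (rule infinite_Ici)
  ultimately have "infinite ((\<lambda>m::nat. m * m) ` {10..})" using finite_imageD by blast
  then show "infinite {card X | X T1 T2. (X, T1, T2) \<in> P}" unfolding eq .
  show "(\<lambda>n. g n / real n) \<longlonglongrightarrow> 0" unfolding g_def by real_asymp
  show "\<forall>(X, T1, T2) \<in> P. finite X \<and> phylo_tree X T1 \<and> phylo_tree X T2 \<and>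
        (\<forall>F. agreement_forest X T1 T2 F \<longrightarrow> real (card F) \<ge> real (card X) - g (card X))"
  proof (clarsimp simp: P_def)
    fix m :: nat assume m: "10 \<le> m"
    have "10 * 10 \<le> m * m" using mult_le_mono[OF m m] .
    then have n4: "4 \<le> m * m" by simp
    interpret A: cat "m * m" id by unfold_locales (use n4 in auto)
    interpret B: cat "m * m" "sig m" by unfold_locales (use n4 m sig_bij in auto)
    have "sqrt (real (m * m)) = real m" by (simp add: real_sqrt_mult)
    then have gm: "g (m * m) = 64 * real m" by (simp add: g_def)
    show "phylo_tree {..<m * m} A.TT \<and> phylo_tree {..<m * m} B.TT \<and>
          (\<forall>F. agreement_forest {..<m * m} A.TT B.TT F \<longrightarrow> real m * real m - g (m * m) \<le> real (card F))"
      using A.phylo B.phylo forest_bound[OF m] gm by simp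
  qed
qed

end
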